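(* Let $(E,\|\cdot\|)$ be a non-archimedean Banach space over $K$ which has a finite maximal orthogonal subset, and let $X=\{a_1,\dots,a_m\}\subseteq E$ be a maximal orthogonal subset. Put $t_i=\|a_i\|$ for $i=1,\dots,m$. Then there exists a $K$-linear isometry $$T:E\to ((K^{\vee})^m,|\cdot|_{t_1}\times\cdots\times|\cdot|_{t_m})$$ such that $T(a_i)=e_i$ for $i=1,\dots,m$, where $e_1,\dots,e_m\in (K^\vee)^m$ are the canonical unit vectors.
   Context: $K$ is a complete non-archimedean non-trivially valued field which is not spherically complete. $K^{\vee}$ is a fixed spherically complete valued field which is an immediate extension of $K$ (for each nonzero $x\in K^\vee$ there is $d\in K$ with $|x-d|<|x|$). For $t>0$, $(K^\vee,|\cdot|_t)$ denotes $K^\vee$ regarded as a $K$-normed space with norm $|x|_t=t|x|$, and $((K^{\vee})^m,|\cdot|_{t_1}\times\cdots\times|\cdot|_{t_m})$ is the direct sum of $(K^\vee,|\cdot|_{t_i})$ with the max norm $\|(x_1,\dots,x_m)\|=\max_i t_i|x_i|$. A subset $X\subseteq E\setminus\{0\}$ is orthogonal if $\|\sum_i\lambda_ix_i\|=\max_i\|\lambda_ix_i\|$ for all finite $\{x_1,\dots,x_n\}\subseteq X$ and $\lambda_i\in K$. *)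

theory Defs
  imports Complex_Main
begin

definition nonarch_abs :: "('a::field \<Rightarrow> real) \<Rightarrow> bool" where
  "nonarch_abs v \<longleftrightarrow> (\<forall>x. 0 \<le> v x) \<and> (\<forall>x. v x = 0 \<longleftrightarrow> x = 0) \<and>
     (\<forall>x y. v (x * y) = v x * v y) \<and> (\<forall>x y. v (x + y) \<le> max (v x) (v y))"

definition nontrivial_abs :: "('a::field \<Rightarrow> real) \<Rightarrow> bool" where
  "nontrivial_abs v \<longleftrightarrow> (\<exists>x. v x \<noteq> 0 \<and> v x \<noteq> 1)"

definition complete_wrt :: "('a::ab_group_add \<Rightarrow> real) \<Rightarrow> bool" where
  "complete_wrt v \<longleftrightarrow> (\<forall>f :: nat \<Rightarrow> 'a.
     (\<forall>\<epsilon>>0. \<exists>N. \<forall>n\<ge>N. \<forall>k\<ge>N. v (f n - f k) < \<epsilon>) \<longrightarrow>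
     (\<exists>l. \<forall>\<epsilon>>0. \<exists>N. \<forall>n\<ge>N. v (f n - l) < \<epsilon>))"

definition cball_wrt :: "('a::ab_group_add \<Rightarrow> real) \<Rightarrow> 'a \<Rightarrow> real \<Rightarrow> 'a set" where
  "cball_wrt v c r = {y. v (y - c) \<le> r}"

definition sph_complete :: "('a::ab_group_add \<Rightarrow> real) \<Rightarrow> bool" where
  "sph_complete v \<longleftrightarrow> (\<forall>\<C> :: 'a set set.
     \<C> \<noteq> {} \<and> (\<forall>B\<in>\<C>. \<exists>c r. 0 < r \<and> B = cball_wrt v c r) \<and>
     (\<forall>B\<in>\<C>. \<forall>B'\<in>\<C>. B \<subseteq> B' \<or> B' \<subseteq> B) \<longrightarrow> \<Inter>\<C> \<noteq> {})"

definition immediate_ext :: "('k::field \<Rightarrow> real) \<Rightarrow> ('v::field \<Rightarrow> real) \<Rightarrow> ('k \<Rightarrow> 'v) \<Rightarrow> bool" where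
  "immediate_ext absK absV \<iota> \<longleftrightarrow>
     (\<forall>x y. \<iota> (x + y) = \<iota> x + \<iota> y) \<and> (\<forall>x y. \<iota> (x * y) = \<iota> x * \<iota> y) \<and> \<iota> 1 = 1 \<and>
     (\<forall>x. absV (\<iota> x) = absK x) \<and>
     (\<forall>x. x \<noteq> 0 \<longrightarrow> (\<exists>d. absV (x - \<iota> d) < absV x))"

definition nonarch_norm :: "('k::field \<Rightarrow> real) \<Rightarrow> ('k \<Rightarrow> 'e::ab_group_add \<Rightarrow> 'e) \<Rightarrow> ('e \<Rightarrow> real) \<Rightarrow> bool" where
  "nonarch_norm absK smul nE \<longleftrightarrow> (\<forall>x. 0 \<le> nE x) \<and> (\<forall>x. nE x = 0 \<longleftrightarrow> x = 0) \<and>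
     (\<forall>c x. nE (smul c x) = absK c * nE x) \<and> (\<forall>x y. nE (x + y) \<le> max (nE x) (nE y))"

definition orthogonal_set :: "('k \<Rightarrow> 'e::ab_group_add \<Rightarrow> 'e) \<Rightarrow> ('e \<Rightarrow> real) \<Rightarrow> 'e set \<Rightarrow> bool" where
  "orthogonal_set smul nE X \<longleftrightarrow> X \<subseteq> - {0} \<and>
     (\<forall>F lam. finite F \<and> F \<subseteq> X \<longrightarrow>
        nE (\<Sum>x\<in>F. smul (lam x) x) = Max (insert 0 ((\<lambda>x. nE (smul (lam x) x)) ` F)))"

definition max_orthogonal_set :: "('k \<Rightarrow> 'e::ab_group_add \<Rightarrow> 'e) \<Rightarrow> ('e \<Rightarrow> real) \<Rightarrow> 'e set \<Rightarrow> bool" where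
  "max_orthogonal_set smul nE X \<longleftrightarrow> orthogonal_set smul nE X \<and>
     (\<forall>Y. orthogonal_set smul nE Y \<and> X \<subseteq> Y \<longrightarrow> Y = X)"

text \<open>Norm of (K^v)^m with |.|_{t_1} x ... x |.|_{t_m}; elements of (K^v)^m are
  functions nat => 'v vanishing outside {..<m}.\<close>
definition prod_norm :: "('v \<Rightarrow> real) \<Rightarrow> (nat \<Rightarrow> real) \<Rightarrow> nat \<Rightarrow> (nat \<Rightarrow> 'v) \<Rightarrow> real" where
  "prod_norm absV t m y = Max (insert 0 ((\<lambda>i. t i * absV (y i)) ` {..<m}))"

end

theory Submission
  imports Defs
begin

lemma na_basic:
  assumes "nonarch_abs v"
  shows "v 0 = 0" "v 1 = 1" "v (-x) = v x" "v (x - y) = v (y - x)"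
    "v (x + y) \<le> max (v x) (v y)" "v x \<ge> 0" "v (x * y) = v x * v y"
    "v x = 0 \<longleftrightarrow> x = 0"
proof -
  have n: "\<And>x. 0 \<le> v x" "\<And>x. v x = 0 \<longleftrightarrow> x = 0" "\<And>x y. v (x*y) = v x * v y"
    "\<And>x y. v (x + y) \<le> max (v x) (v y)" using assms unfolding nonarch_abs_def by auto
  show "v 0 = 0" "v x \<ge> 0" "v (x + y) \<le> max (v x) (v y)" "v (x * y) = v x * v y"
    "v x = 0 \<longleftrightarrow> x = 0" using n by auto
  have "v 1 = v 1 * v 1" using n(3)[of 1 1] by simp
  moreover have "v 1 \<noteq> 0" using n(2)[of 1] by simp
  ultimately show v1: "v 1 = 1" by (metis mult_cancel_right1)
  have "v (-1) * v (-1) = 1" using n(3)[of "-1" "-1"] v1 by simp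
  then have "(v (-1) - 1) * (v (-1) + 1) = 0" by (simp add: algebra_simps)
  moreover have "v (-1) + 1 > 0" using n(1)[of "-1"] by linarith
  ultimately have m1: "v (-1) = 1" by simp
  have neg: "v (-z) = v z" for z using n(3)[of "-1" z] m1 by simp
  then show "v (-x) = v x" .
  show "v (x - y) = v (y - x)" using neg[of "x - y"] by simp
qed

lemma na_strict:
  assumes "nonarch_abs v" "v x \<noteq> v y"
  shows "v (x + y) = max (v x) (v y)"
proof -
  have *: "v (x + y) = v y" if "v x < v y" for x y
  proof -
    have "v y = v ((x + y) + (-x))" by simp
    also have "\<dots> \<le> max (v (x+y)) (v x)" using na_basic(5)[OF assms(1)] na_basic(3)[OF assms(1)] by metis
    finally have "v y \<le> v (x + y)" using that by auto
    moreover have "v (x + y) \<le> v y" using na_basic(5)[OF assms(1), of x y] that by auto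
    ultimately show ?thesis by auto
  qed
  show ?thesis
  proof (cases "v x < v y")
    case True then show ?thesis using * by auto
  next
    case False then have "v y < v x" using assms(2) by auto
    then show ?thesis using *[of y x] by (auto simp: add.commute)
  qed
qed


locale ctx = vector_space smul
  for smul :: "'k::field \<Rightarrow> 'e::ab_group_add \<Rightarrow> 'e" +
  fixes absK :: "'k \<Rightarrow> real" and absV :: "'v::field \<Rightarrow> real" and \<iota> :: "'k \<Rightarrow> 'v"
    and nE :: "'e \<Rightarrow> real" and a :: "nat \<Rightarrow> 'e" and m :: nat
  assumes K_abs: "nonarch_abs absK" and V_abs: "nonarch_abs absV" and V_sc: "sph_complete absV"
    and V_imm: "immediate_ext absK absV \<iota>" and E_norm: "nonarch_norm absK smul nE"
    and a_inj: "inj_on a {..<m}" and X_max: "max_orthogonal_set smul nE (a ` {..<m})"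
begin

definition t where "t i = nE (a i)"
definition pn where "pn y = prod_norm absV t m y"

lemma iota: "\<iota> (x + y) = \<iota> x + \<iota> y" "\<iota> (x * y) = \<iota> x * \<iota> y" "\<iota> 1 = 1"
  "absV (\<iota> x) = absK x"
  using V_imm unfolding immediate_ext_def by auto

lemma iota0[simp]: "\<iota> 0 = 0"
proof -
  have "\<iota> 0 + \<iota> 0 = \<iota> 0 + 0" using iota(1)[of 0 0] by simp
  then show ?thesis by (metis add_left_cancel)
qed

lemma iota_neg[simp]: "\<iota> (-x) = - \<iota> x"
proof -
  have "\<iota> x + \<iota> (-x) = 0" using iota(1)[of x "-x"] by simp
  then show ?thesis by (metis neg_eq_iff_add_eq_0)
qed

lemma iota_m1[simp]: "\<iota> (-1) = -1"
  using iota_neg[of 1] iota(3) by simp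

lemma nE: "nE x \<ge> 0" "nE x = 0 \<longleftrightarrow> x = 0" "nE (smul c x) = absK c * nE x"
  "nE (x + y) \<le> max (nE x) (nE y)"
  using E_norm unfolding nonarch_norm_def by auto

lemma nE0[simp]: "nE 0 = 0" using nE(2) by simp

lemma nE_neg[simp]: "nE (-x) = nE x"
proof -
  have "nE (-x) = nE (smul (-1) x)" by simp
  also have "\<dots> = nE x" using nE(3)[of "-1" x] na_basic(2,3)[OF K_abs] by simp
  finally show ?thesis .
qed

lemma nE_commute: "nE (x - y) = nE (y - x)"
  using nE_neg[of "x - y"] by simp

lemma nE_strict:
  assumes "nE x \<noteq> nE y"
  shows "nE (x + y) = max (nE x) (nE y)"
proof -
  have *: "nE (x + y) = nE y" if "nE x < nE y" for x y
  proof -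
    have "nE y = nE ((x + y) + (-x))" by simp
    also have "\<dots> \<le> max (nE (x+y)) (nE x)" using nE(4) nE_neg by metis
    finally have "nE y \<le> nE (x + y)" using that by auto
    moreover have "nE (x + y) \<le> nE y" using nE(4)[of x y] that by auto
    ultimately show ?thesis by auto
  qed
  show ?thesis
  proof (cases "nE x < nE y")
    case True then show ?thesis using * by auto
  next
    case False then have "nE y < nE x" using assms by auto
    then show ?thesis using *[of y x] by (auto simp: add.commute)
  qed
qed

lemma orth: "orthogonal_set smul nE (a ` {..<m})"
  using X_max unfolding max_orthogonal_set_def by auto

lemma t_pos: "i < m \<Longrightarrow> t i > 0"
proof -
  assume "i < m"
  then have "a i \<noteq> 0" using orth unfolding orthogonal_set_def by auto
  then show "t i > 0" unfolding t_def using nE(1,2)[of "a i"] by auto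
qed

lemma pn_le_iff: "0 \<le> r \<Longrightarrow> pn y \<le> r \<longleftrightarrow> (\<forall>i<m. t i * absV (y i) \<le> r)"
  unfolding pn_def prod_norm_def by (subst Max_le_iff) auto

lemma pn_ge: "i < m \<Longrightarrow> t i * absV (y i) \<le> pn y"
  unfolding pn_def prod_norm_def by (rule Max_ge) auto

lemma pn_nonneg: "pn y \<ge> 0"
  unfolding pn_def prod_norm_def by (rule Max_ge) auto

lemma pn_ultra: "pn (\<lambda>i. y i + z i) \<le> max (pn y) (pn z)"
proof (subst pn_le_iff)
  show "0 \<le> max (pn y) (pn z)" using pn_nonneg by (simp add: le_max_iff_disj)
  show "\<forall>i<m. t i * absV (y i + z i) \<le> max (pn y) (pn z)"
  proof (intro allI impI)
    fix i assume i: "i < m"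
    have "t i * absV (y i + z i) \<le> t i * max (absV (y i)) (absV (z i))"
      using na_basic(5)[OF V_abs] t_pos[OF i] by (simp add: mult_left_mono)
    also have "\<dots> = max (t i * absV (y i)) (t i * absV (z i))"
      using t_pos[OF i] by (simp add: max_def)
    also have "\<dots> \<le> max (pn y) (pn z)" using pn_ge[OF i] by (meson max.mono)
    finally show "t i * absV (y i + z i) \<le> max (pn y) (pn z)" .
  qed
qed

lemma pn_neg: "pn (\<lambda>i. - y i) = pn y"
  unfolding pn_def prod_norm_def using na_basic(3)[OF V_abs] by simp

lemma pn_scale_le: "pn (\<lambda>i. \<iota> c * y i) \<le> absK c * pn y"
proof (subst pn_le_iff)
  show "0 \<le> absK c * pn y" using pn_nonneg na_basic(6)[OF K_abs] by simp
  show "\<forall>i<m. t i * absV (\<iota> c * y i) \<le> absK c * pn y"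
    using pn_ge na_basic(6,7)[OF V_abs] iota(4) na_basic(6)[OF K_abs]
    by (metis mult.left_commute mult_left_mono)
qed

lemma pn_scale: "pn (\<lambda>i. \<iota> c * y i) = absK c * pn y"
proof (cases "c = 0")
  case True
  have "pn (\<lambda>i. 0) \<le> 0" by (subst pn_le_iff) (auto simp: na_basic(1)[OF V_abs])
  then show ?thesis using True pn_nonneg[of "\<lambda>i. 0"] na_basic(1)[OF K_abs] by simp
next
  case False
  have "pn y = pn (\<lambda>i. \<iota> (inverse c) * (\<iota> c * y i))"
    using False by (simp add: iota(2)[symmetric] mult.assoc[symmetric] iota(3))
  also have "\<dots> \<le> absK (inverse c) * pn (\<lambda>i. \<iota> c * y i)" by (rule pn_scale_le)
  finally have "absK c * pn y \<le> absK c * absK (inverse c) * pn (\<lambda>i. \<iota> c * y i)"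
    using na_basic(6)[OF K_abs] by (simp add: mult_left_mono mult.assoc)
  also have "absK c * absK (inverse c) = 1" using False na_basic(2,7)[OF K_abs, symmetric]
    by (metis right_inverse)
  finally show ?thesis using pn_scale_le[of c y] by simp
qed

lemma pn_zero: "pn y = 0 \<Longrightarrow> i < m \<Longrightarrow> y i = 0"
  using pn_ge[of i y] t_pos[of i] na_basic(6,8)[OF V_abs, of "y i"]
  by (metis le_less_trans less_le mult_pos_pos)


definition comb where "comb l = (\<Sum>i<m. smul (l i) (a i))"
definition cvec where "cvec l = (\<lambda>j. if j < m then \<iota> (l j) else 0)"
definition G0 where "G0 = range (\<lambda>l. (comb l, cvec l))"
definition good where "good G \<longleftrightarrow> G0 \<subseteq> G \<and>
  (\<forall>x y x' y'. (x,y)\<in>G \<longrightarrow> (x',y')\<in>G \<longrightarrow> (x+x', \<lambda>i. y i + y' i) \<in> G) \<and>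
  (\<forall>x y c. (x,y)\<in>G \<longrightarrow> (smul c x, \<lambda>i. \<iota> c * y i) \<in> G) \<and>
  (\<forall>x y. (x,y)\<in>G \<longrightarrow> pn y = nE x \<and> (\<forall>i\<ge>m. y i = 0))"

lemma comb_norm: "nE (comb l) = pn (cvec l)"
proof -
  define lam where "lam x = l (inv_into {..<m} a x)" for x
  have "nE (\<Sum>x\<in>a ` {..<m}. smul (lam x) x) = Max (insert 0 ((\<lambda>x. nE (smul (lam x) x)) ` a ` {..<m}))"
    using orth unfolding orthogonal_set_def by blast
  moreover have "(\<Sum>x\<in>a ` {..<m}. smul (lam x) x) = comb l"
    unfolding comb_def by (simp add: sum.reindex[OF a_inj] lam_def inv_into_f_f[OF a_inj])
  moreover have "(\<lambda>x. nE (smul (lam x) x)) ` a ` {..<m} = (\<lambda>i. t i * absV (cvec l i)) ` {..<m}"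
    unfolding image_image
    by (rule image_cong) (auto simp: lam_def inv_into_f_f[OF a_inj] cvec_def nE(3) iota(4) t_def)
  ultimately show ?thesis unfolding pn_def prod_norm_def by simp
qed

lemma comb_basis: "i < m \<Longrightarrow> comb (\<lambda>j. if j = i then 1 else 0) = a i"
  unfolding comb_def by (simp add: if_distrib[of "\<lambda>c. smul c _"] cong: if_cong)

lemma cvec_basis: "i < m \<Longrightarrow> cvec (\<lambda>j. if j = i then 1 else 0) = (\<lambda>j. if j = i then 1 else 0)"
  unfolding cvec_def by (auto simp: iota(3))

lemma comb_zero: "comb (\<lambda>_. 0) = 0" "cvec (\<lambda>_. 0) = (\<lambda>_. 0)"
  unfolding comb_def cvec_def by auto

lemma G0_good: "good G0"
proof -
  have A: "(x + x', \<lambda>i. y i + y' i) \<in> G0" if xy: "(x,y) \<in> G0" "(x',y') \<in> G0" for x y x' y'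
  proof -
    obtain l where "x = comb l" "y = cvec l" using xy(1) unfolding G0_def by auto
    moreover obtain l' where "x' = comb l'" "y' = cvec l'" using xy(2) unfolding G0_def by auto
    moreover have "comb l + comb l' = comb (\<lambda>i. l i + l' i)"
      unfolding comb_def by (simp add: scale_left_distrib sum.distrib)
    moreover have "(\<lambda>i. cvec l i + cvec l' i) = cvec (\<lambda>i. l i + l' i)"
      unfolding cvec_def by (auto simp: iota(1))
    ultimately show ?thesis unfolding G0_def by auto
  qed
  have B: "(smul c x, \<lambda>i. \<iota> c * y i) \<in> G0" if xy: "(x,y) \<in> G0" for x y c
  proof -
    obtain l where "x = comb l" "y = cvec l" using xy unfolding G0_def by auto
    moreover have "smul c (comb l) = comb (\<lambda>i. c * l i)"
      unfolding comb_def by (simp add: scale_sum_right)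
    moreover have "(\<lambda>i. \<iota> c * cvec l i) = cvec (\<lambda>i. c * l i)"
      unfolding cvec_def by (auto simp: iota(2))
    ultimately show ?thesis unfolding G0_def by auto
  qed
  have C: "pn y = nE x \<and> (\<forall>i\<ge>m. y i = 0)" if xy: "(x,y) \<in> G0" for x y
  proof -
    obtain l where "x = comb l" "y = cvec l" using xy unfolding G0_def by auto
    then show ?thesis using comb_norm by (auto simp: cvec_def)
  qed
  show ?thesis unfolding good_def
    by (intro conjI allI impI subset_refl A B; (elim C[THEN conjunct1] C[THEN conjunct2, rule_format])?)
qed

lemma orth_app: "finite F \<Longrightarrow> F \<subseteq> a ` {..<m} \<Longrightarrow>
   nE (\<Sum>x\<in>F. smul (lam x) x) = Max (insert 0 ((\<lambda>x. nE (smul (lam x) x)) ` F))"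
  using orth unfolding orthogonal_set_def by simp

lemma imm:
  assumes "z \<noteq> 0"
  shows "\<exists>F lam. finite F \<and> F \<subseteq> a ` {..<m} \<and> nE (z - (\<Sum>x\<in>F. smul (lam x) x)) < nE z"
proof (rule ccontr)
  assume "\<not> ?thesis"
  then have H: "\<And>F lam. finite F \<Longrightarrow> F \<subseteq> a ` {..<m} \<Longrightarrow> nE z \<le> nE (z - (\<Sum>x\<in>F. smul (lam x) x))"
    by (meson not_less)
  have "orthogonal_set smul nE (insert z (a ` {..<m}))"
    unfolding orthogonal_set_def
  proof (intro conjI allI impI)
    show "insert z (a ` {..<m}) \<subseteq> - {0}" using assms orth unfolding orthogonal_set_def by auto
  next
    fix F lam assume F: "finite F \<and> F \<subseteq> insert z (a ` {..<m})"
    let ?f = "\<lambda>x. nE (smul (lam x) x)"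
    show "nE (\<Sum>x\<in>F. smul (lam x) x) = Max (insert 0 (?f ` F))"
    proof (cases "z \<in> F")
      case False
      then have "F \<subseteq> a ` {..<m}" using F by auto
      then show ?thesis using F orth_app by simp
    next
      case True
      define F' where "F' = F - {z}"
      have F': "finite F'" "F' \<subseteq> a ` {..<m}" "F = insert z F'" "z \<notin> F'"
        using F True unfolding F'_def by auto
      define c where "c = lam z"
      define d where "d = (\<Sum>x\<in>F'. smul (lam x) x)"
      have nd: "nE d = Max (insert 0 (?f ` F'))"
        using F' orth_app unfolding d_def by simp
      have sum: "(\<Sum>x\<in>F. smul (lam x) x) = smul c z + d"
        using F' unfolding c_def d_def by simp
      have "insert 0 (?f ` F) = insert (?f z) (insert 0 (?f ` F'))" using F' by auto
      then have "Max (insert 0 (?f ` F)) = max (?f z) (Max (insert 0 (?f ` F')))"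
        using F' by (simp only:) (rule Max_insert; simp)
      then have mx: "Max (insert 0 (?f ` F)) = max (nE (smul c z)) (nE d)"
        using nd unfolding c_def by simp
      have key: "nE (smul c z + d) = max (nE (smul c z)) (nE d)"
      proof (cases "c = 0")
        case True then show ?thesis using nE(1)[of d] by simp
      next
        case False
        have "(\<Sum>x\<in>F'. smul (- (inverse c * lam x)) x) = smul (- inverse c) d"
          unfolding d_def by (simp add: scale_sum_right)
        then have "nE z \<le> nE (z - smul (- inverse c) d)" using H[OF F'(1,2), of "\<lambda>x. - (inverse c * lam x)"] by simp
        moreover have "smul c (z - smul (- inverse c) d) = smul c z + d"
          using False by (simp add: scale_right_diff_distrib scale_right_distrib)
        ultimately have ge: "nE (smul c z) \<le> nE (smul c z + d)"
          using nE(3) na_basic(6)[OF K_abs] by (metis mult_left_mono)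
        show ?thesis
        proof (cases "nE (smul c z) = nE d")
          case True then show ?thesis using ge nE(4)[of "smul c z" d] by auto
        next
          case False then show ?thesis using nE_strict by blast
        qed
      qed
      show ?thesis using sum mx key by simp
    qed
  qed
  then have "insert z (a ` {..<m}) = a ` {..<m}"
    using X_max unfolding max_orthogonal_set_def by auto
  then have zX: "z \<in> a ` {..<m}" by auto
  have "nE z \<le> nE (z - (\<Sum>x\<in>{z}. smul 1 x))" using H[of "{z}" "\<lambda>_. 1"] zX by simp
  then show False using assms nE(1,2)[of z] by simp
qed


lemma goodD:
  assumes "good G"
  shows "G0 \<subseteq> G" "(x,y)\<in>G \<Longrightarrow> (x',y')\<in>G \<Longrightarrow> (x+x', \<lambda>i. y i + y' i) \<in> G"
    "(x,y)\<in>G \<Longrightarrow> (smul c x, \<lambda>i. \<iota> c * y i) \<in> G"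
    "(x,y)\<in>G \<Longrightarrow> pn y = nE x" "(x,y)\<in>G \<Longrightarrow> m \<le> i \<Longrightarrow> y i = 0"
  using assms unfolding good_def by (simp_all only: split_paired_all)

lemma good_zero: "good G \<Longrightarrow> (0, \<lambda>_. 0) \<in> G"
proof -
  assume g: "good G"
  have "(comb (\<lambda>_. 0), cvec (\<lambda>_. 0)) \<in> G0" unfolding G0_def by (rule rangeI)
  then show ?thesis using goodD(1)[OF g] comb_zero by auto
qed

lemma good_diff: "good G \<Longrightarrow> (x,y)\<in>G \<Longrightarrow> (x',y')\<in>G \<Longrightarrow> (x - x', \<lambda>i. y i - y' i) \<in> G"
  using goodD(2)[of G x y "smul (-1) x'" "\<lambda>i. \<iota> (-1) * y' i"] goodD(3)[of G x' y' "-1"] by (simp add: iota(3))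

lemma good_fun: "good G \<Longrightarrow> (x,y)\<in>G \<Longrightarrow> (x,y')\<in>G \<Longrightarrow> y = y'"
proof
  fix i assume g: "good G" "(x,y)\<in>G" "(x,y')\<in>G"
  have "(0, \<lambda>i. y i - y' i) \<in> G" using good_diff[OF g] by simp
  then have "pn (\<lambda>i. y i - y' i) = 0" using goodD(4)[OF g(1)] nE0 by metis
  then show "y i = y' i"
  proof (cases "i < m")
    case True then show ?thesis using pn_zero[OF \<open>pn _ = 0\<close> True] by simp
  next
    case False
    then have "y i = 0" "y' i = 0" using goodD(5)[OF g(1)] g(2,3) by (simp_all add: not_less)
    then show ?thesis by simp
  qed
qed

lemma good_basis: "good G \<Longrightarrow> i < m \<Longrightarrow> (a i, \<lambda>j. if j = i then 1 else 0) \<in> G"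
proof -
  assume g: "good G" and i: "i < m"
  have "(comb (\<lambda>j. if j = i then 1 else 0), cvec (\<lambda>j. if j = i then 1 else 0)) \<in> G0"
    unfolding G0_def by (rule rangeI)
  then show ?thesis using goodD(1)[OF g] comb_basis[OF i] cvec_basis[OF i] by auto
qed

lemma good_dom: assumes g: "good G" shows "finite F \<Longrightarrow> F \<subseteq> a ` {..<m} \<Longrightarrow> \<exists>y. ((\<Sum>x\<in>F. smul (lam x) x), y) \<in> G"
proof (induction F rule: finite_induct)
  case empty then show ?case using good_zero[OF g] by auto
next
  case (insert z F)
  then obtain y where y: "((\<Sum>x\<in>F. smul (lam x) x), y) \<in> G" by auto
  obtain i where i: "i < m" "z = a i" using insert by auto
  obtain yz where "(z, yz) \<in> G" using good_basis[OF g i(1)] i by auto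
  then have sz: "(smul (lam z) z, \<lambda>j. \<iota> (lam z) * yz j) \<in> G" using goodD(3)[OF g] by blast
  show ?case using goodD(2)[OF g sz y] insert(1,2) by auto
qed


lemma vsc: assumes "C \<noteq> {}" "(\<forall>B\<in>C. \<exists>c r. 0 < r \<and> B = cball_wrt absV c r)"
  "(\<forall>B\<in>C. \<forall>B'\<in>C. B \<subseteq> B' \<or> B' \<subseteq> B)" shows "\<Inter>C \<noteq> {}"
proof -
  have "C \<noteq> {} \<and> (\<forall>B\<in>C. \<exists>c r. 0 < r \<and> B = cball_wrt absV c r) \<and>
    (\<forall>B\<in>C. \<forall>B'\<in>C. B \<subseteq> B' \<or> B' \<subseteq> B)" using assms by (intro conjI)
  from V_sc[unfolded sph_complete_def, rule_format, OF this] show ?thesis .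
qed

lemma extend:
  assumes g: "good M" and nx: "\<And>y. (x,y) \<notin> M"
  shows "\<exists>M'. good M' \<and> M \<subseteq> M' \<and> M' \<noteq> M"
proof -
  have pos: "nE (x - f) > 0" if "(f,yf) \<in> M" for f yf
  proof -
    have "x \<noteq> f" using nx that by auto
    then show ?thesis using nE(1,2)[of "x - f"] by auto
  qed
  have gap: "\<exists>g yg. (g,yg) \<in> M \<and> nE (x - g) < nE (x - f)" if fM: "(f,yf) \<in> M" for f yf
  proof -
    have "x - f \<noteq> 0" using pos[OF fM] by auto
    then obtain F lam where F: "finite F" "F \<subseteq> a ` {..<m}"
      and lt: "nE (x - f - (\<Sum>x\<in>F. smul (lam x) x)) < nE (x - f)"
      using imm by blast
    obtain yd where yd: "((\<Sum>x\<in>F. smul (lam x) x), yd) \<in> M" using good_dom[OF g F] by blast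
    have "(f + (\<Sum>x\<in>F. smul (lam x) x), \<lambda>i. yf i + yd i) \<in> M" using goodD(2)[OF g fM yd] .
    moreover have "x - (f + (\<Sum>x\<in>F. smul (lam x) x)) = x - f - (\<Sum>x\<in>F. smul (lam x) x)"
      by (simp add: algebra_simps)
    ultimately show ?thesis using lt by metis
  qed
  have dfg: "t i * absV (yf i - yg i) \<le> max (nE (x - f)) (nE (x - g))"
    if fM: "(f,yf) \<in> M" and gM: "(g,yg) \<in> M" and i: "i < m" for f yf g yg i
  proof -
    have "t i * absV (yf i - yg i) \<le> pn (\<lambda>i. yf i - yg i)" using pn_ge[OF i] .
    also have "\<dots> = nE (f - g)" using goodD(4)[OF g good_diff[OF g fM gM]] .
    also have "f - g = (x - g) + - (x - f)" by (simp add: algebra_simps)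
    also have "nE \<dots> \<le> max (nE (x - f)) (nE (x - g))" using nE(4)[of "x - g" "- (x - f)"] unfolding nE_neg
      by (simp only: max.commute)
    finally show ?thesis .
  qed
  have "\<forall>i. \<exists>w. i < m \<longrightarrow> (\<forall>f yf. (f,yf) \<in> M \<longrightarrow> absV (w - yf i) \<le> nE (x - f) / t i)"
  proof
    fix i
    show "\<exists>w. i < m \<longrightarrow> (\<forall>f yf. (f,yf) \<in> M \<longrightarrow> absV (w - yf i) \<le> nE (x - f) / t i)"
    proof (cases "i < m")
      case False then show ?thesis by auto
    next
      case i: True
      define C where "C = (\<lambda>(f,yf). cball_wrt absV (yf i) (nE (x - f) / t i)) ` M"
      have "C \<noteq> {}" using good_zero[OF g] unfolding C_def by auto
      moreover have "\<forall>B\<in>C. \<exists>c r. 0 < r \<and> B = cball_wrt absV c r"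
      proof
        fix B assume "B \<in> C"
        then obtain f yf where fM: "(f,yf) \<in> M" and B: "B = cball_wrt absV (yf i) (nE (x - f) / t i)"
          unfolding C_def by auto
        have "0 < nE (x - f) / t i" using pos[OF fM] t_pos[OF i] by simp
        then show "\<exists>c r. 0 < r \<and> B = cball_wrt absV c r" using B by blast
      qed
      moreover have "\<forall>B\<in>C. \<forall>B'\<in>C. B \<subseteq> B' \<or> B' \<subseteq> B"
      proof -
        have sub: "cball_wrt absV (yg i) (nE (x - g) / t i) \<subseteq> cball_wrt absV (yf i) (nE (x - f) / t i)"
          if fM: "(f,yf) \<in> M" and gM: "(g,yg) \<in> M" and le: "nE (x - g) \<le> nE (x - f)" for f yf g yg
        proof
          fix u assume "u \<in> cball_wrt absV (yg i) (nE (x - g) / t i)"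
          then have u: "absV (u - yg i) \<le> nE (x - g) / t i" unfolding cball_wrt_def by simp
          have "t i * absV (yf i - yg i) \<le> nE (x - f)" using dfg[OF fM gM i] le by simp
          then have d: "absV (yg i - yf i) \<le> nE (x - f) / t i"
            using t_pos[OF i] na_basic(4)[OF V_abs] by (simp add: pos_le_divide_eq mult.commute)
          have "nE (x - g) / t i \<le> nE (x - f) / t i" using le t_pos[OF i] by (simp add: divide_right_mono)
          then have "absV (u - yg i) \<le> nE (x - f) / t i" using u by simp
          moreover have "u - yf i = (u - yg i) + (yg i - yf i)" by simp
          ultimately have "absV (u - yf i) \<le> nE (x - f) / t i"
            using na_basic(5)[OF V_abs, of "u - yg i" "yg i - yf i"] d by simp
          then show "u \<in> cball_wrt absV (yf i) (nE (x - f) / t i)" unfolding cball_wrt_def by simp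
        qed
        show ?thesis unfolding C_def
        proof (intro ballI)
          fix B B' assume "B \<in> (\<lambda>(f,yf). cball_wrt absV (yf i) (nE (x - f) / t i)) ` M"
            "B' \<in> (\<lambda>(f,yf). cball_wrt absV (yf i) (nE (x - f) / t i)) ` M"
          then obtain f yf g yg where "(f,yf) \<in> M" "(g,yg) \<in> M"
            "B = cball_wrt absV (yf i) (nE (x - f) / t i)" "B' = cball_wrt absV (yg i) (nE (x - g) / t i)"
            by auto
          note h = this
          show "B \<subseteq> B' \<or> B' \<subseteq> B"
          proof (cases "nE (x - g) \<le> nE (x - f)")
            case True then show ?thesis using sub[OF h(1,2) True] h(3,4) by simp
          next
            case False then show ?thesis using sub[OF h(2,1)] h(3,4) by simp
          qed
        qed
      qed
      ultimately have "\<Inter>C \<noteq> {}" by (rule vsc)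
      then obtain w where "w \<in> \<Inter>C" by blast
      then have "\<forall>f yf. (f,yf) \<in> M \<longrightarrow> absV (w - yf i) \<le> nE (x - f) / t i"
        unfolding C_def cball_wrt_def by auto
      then show ?thesis by blast
    qed
  qed
  then obtain w where w0: "\<forall>i. i < m \<longrightarrow> (\<forall>f yf. (f,yf) \<in> M \<longrightarrow> absV (w i - yf i) \<le> nE (x - f) / t i)"
    by (rule choice[THEN exE])
  have w: "\<And>i f yf. i < m \<Longrightarrow> (f,yf) \<in> M \<Longrightarrow> absV (w i - yf i) \<le> nE (x - f) / t i"
    using w0 by blast
  define y where "y i = (if i < m then w i else 0)" for i
  have yle: "pn (\<lambda>i. y i - yf i) \<le> nE (x - f)" if fM: "(f,yf) \<in> M" for f yf
  proof (subst pn_le_iff)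
    show "0 \<le> nE (x - f)" using nE(1) .
    show "\<forall>i<m. t i * absV (y i - yf i) \<le> nE (x - f)"
    proof (intro allI impI)
      fix i assume i: "i < m"
      have "absV (w i - yf i) \<le> nE (x - f) / t i" using w[OF i fM] .
      then show "t i * absV (y i - yf i) \<le> nE (x - f)"
        using t_pos[OF i] i unfolding y_def by (simp add: pos_le_divide_eq mult.commute)
    qed
  qed
  have yeq: "pn (\<lambda>i. y i - yf i) = nE (x - f)" if fM: "(f,yf) \<in> M" for f yf
  proof -
    obtain g yg where gM: "(g,yg) \<in> M" and lt: "nE (x - g) < nE (x - f)" using gap[OF fM] by blast
    have fg: "f - g = (x - g) + - (x - f)" by (simp add: algebra_simps)
    have ne: "nE (x - g) \<noteq> nE (- (x - f))" unfolding nE_neg using lt by simp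
    have "nE ((x - g) + - (x - f)) = max (nE (x - g)) (nE (- (x - f)))" using nE_strict[OF ne] .
    then have nfg: "nE (f - g) = nE (x - f)" using lt unfolding fg[symmetric] nE_neg by simp
    have "nE (f - g) = pn (\<lambda>i. yf i - yg i)" using goodD(4)[OF g good_diff[OF g fM gM]] by simp
    also have "(\<lambda>i. yf i - yg i) = (\<lambda>i. (y i - yg i) + - (y i - yf i))" by (simp add: algebra_simps)
    also have "pn \<dots> \<le> max (pn (\<lambda>i. y i - yg i)) (pn (\<lambda>i. - (y i - yf i)))" by (rule pn_ultra)
    also have "pn (\<lambda>i. - (y i - yf i)) = pn (\<lambda>i. y i - yf i)" by (rule pn_neg)
    finally have "nE (x - f) \<le> max (pn (\<lambda>i. y i - yg i)) (pn (\<lambda>i. y i - yf i))" using nfg by simp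
    moreover have "pn (\<lambda>i. y i - yg i) < nE (x - f)" using yle[OF gM] lt by simp
    ultimately have "nE (x - f) \<le> pn (\<lambda>i. y i - yf i)" by (simp add: le_max_iff_disj)
    then show ?thesis using yle[OF fM] by simp
  qed
  define M' where "M' = {(f + smul c x, \<lambda>i. yf i + \<iota> c * y i) | f yf c. (f,yf) \<in> M}"
  have MM': "M \<subseteq> M'"
  proof
    fix p assume "p \<in> M"
    moreover obtain f yf where "p = (f,yf)" by fastforce
    moreover have "(f,yf) = (f + smul 0 x, \<lambda>i. yf i + \<iota> 0 * y i)" by simp
    ultimately show "p \<in> M'" unfolding M'_def by blast
  qed
  have xM': "(x, \<lambda>i. 0 + \<iota> 1 * y i) \<in> M'"
  proof -
    have "(x, \<lambda>i. 0 + \<iota> 1 * y i) = (0 + smul 1 x, \<lambda>i. (\<lambda>_. 0) i + \<iota> 1 * y i)" by simp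
    then show ?thesis unfolding M'_def
      by (intro CollectI exI[of _ 0] exI[of _ "\<lambda>_. 0"] exI[of _ 1] conjI) (simp_all add: good_zero[OF g])
  qed
  have memM': "(f + smul c x, \<lambda>i. yf i + \<iota> c * y i) \<in> M'" if "(f,yf) \<in> M" for f yf c
    unfolding M'_def using that by blast
  have gM': "good M'"
  proof -
    have A: "(p + p', \<lambda>i. q i + q' i) \<in> M'" if pq: "(p,q) \<in> M'" "(p',q') \<in> M'" for p q p' q'
    proof -
      obtain f yf c where 1: "(f,yf) \<in> M" "p = f + smul c x" "q = (\<lambda>i. yf i + \<iota> c * y i)"
        using pq(1) unfolding M'_def by blast
      obtain f' yf' c' where 2: "(f',yf') \<in> M" "p' = f' + smul c' x" "q' = (\<lambda>i. yf' i + \<iota> c' * y i)"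
        using pq(2) unfolding M'_def by blast
      have ff: "(f + f', \<lambda>i. yf i + yf' i) \<in> M" using goodD(2)[OF g 1(1) 2(1)] .
      have e1: "p + p' = (f + f') + smul (c + c') x" using 1 2 by (simp add: algebra_simps)
      have e2: "(\<lambda>i. q i + q' i) = (\<lambda>i. (yf i + yf' i) + \<iota> (c + c') * y i)"
        using 1 2 by (simp add: iota(1) algebra_simps)
      show ?thesis unfolding e1 e2 by (rule memM'[OF ff])
    qed
    have B: "(smul k p, \<lambda>i. \<iota> k * q i) \<in> M'" if pq: "(p,q) \<in> M'" for p q k
    proof -
      obtain f yf c where 1: "(f,yf) \<in> M" "p = f + smul c x" "q = (\<lambda>i. yf i + \<iota> c * y i)"
        using pq(1) unfolding M'_def by blast
      have kf: "(smul k f, \<lambda>i. \<iota> k * yf i) \<in> M" using goodD(3)[OF g 1(1)] .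
      have e1: "smul k p = smul k f + smul (k * c) x" using 1 by (simp add: scale_right_distrib)
      have e2: "(\<lambda>i. \<iota> k * q i) = (\<lambda>i. \<iota> k * yf i + \<iota> (k * c) * y i)"
        using 1 by (simp add: iota(2) algebra_simps)
      show ?thesis unfolding e1 e2 by (rule memM'[OF kf])
    qed
    have C: "pn q = nE p \<and> (\<forall>i\<ge>m. q i = 0)" if pq: "(p,q) \<in> M'" for p q
    proof -
      obtain f yf c where 1: "(f,yf) \<in> M" "p = f + smul c x" "q = (\<lambda>i. yf i + \<iota> c * y i)"
        using pq(1) unfolding M'_def by blast
      have z: "\<forall>i\<ge>m. q i = 0" using 1 goodD(5)[OF g 1(1)] unfolding y_def by auto
      have "pn q = nE p"
      proof (cases "c = 0")
        case True then show ?thesis using 1 goodD(4)[OF g 1(1)] by simp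
      next
        case False
        define k where "k = - inverse c"
        have ck: "c * k = -1" using False unfolding k_def by simp
        have kM: "(smul k f, \<lambda>i. \<iota> k * yf i) \<in> M" using goodD(3)[OF g 1(1)] .
        have "smul c (x - smul k f) = p" using 1 ck by (simp add: scale_right_diff_distrib add.commute)
        then have "nE p = absK c * nE (x - smul k f)" using nE(3) by metis
        also have "\<dots> = absK c * pn (\<lambda>i. y i - \<iota> k * yf i)" using yeq[OF kM] by simp
        also have "\<dots> = pn (\<lambda>i. \<iota> c * (y i - \<iota> k * yf i))" using pn_scale by simp
        also have "(\<lambda>i. \<iota> c * (y i - \<iota> k * yf i)) = q"
        proof
          fix i
          have "\<iota> c * (y i - \<iota> k * yf i) = \<iota> c * y i - \<iota> (c * k) * yf i"
            by (simp add: iota(2) algebra_simps)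
          then show "\<iota> c * (y i - \<iota> k * yf i) = q i" using 1 ck by (simp add: iota(3))
        qed
        finally show ?thesis by simp
      qed
      with z show ?thesis by simp
    qed
    have "G0 \<subseteq> M'" using goodD(1)[OF g] MM' by blast
    then show ?thesis unfolding good_def
      by (intro conjI allI impI A B; (elim C[THEN conjunct1] C[THEN conjunct2, rule_format])?)
  qed
  have "M' \<noteq> M" using xM' nx by blast
  then show ?thesis using gM' MM' by blast
qed


lemma good_Union:
  assumes ne: "CC \<noteq> {}" and ch: "subset.chain {G. good G} CC"
  shows "good (\<Union>CC)"
proof -
  have gC: "\<And>G. G \<in> CC \<Longrightarrow> good G" and cmp: "\<And>G1 G2. G1 \<in> CC \<Longrightarrow> G2 \<in> CC \<Longrightarrow> G1 \<subseteq> G2 \<or> G2 \<subseteq> G1"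
    using ch unfolding subset_chain_def by auto
  obtain G where G: "G \<in> CC" using ne by auto
  have A: "(x + x', \<lambda>i. y i + y' i) \<in> \<Union>CC" if xy: "(x,y) \<in> \<Union>CC" "(x',y') \<in> \<Union>CC" for x y x' y'
  proof -
    obtain G1 G2 where 1: "G1 \<in> CC" "(x,y) \<in> G1" and 2: "G2 \<in> CC" "(x',y') \<in> G2" using xy by auto
    show ?thesis
    proof (cases "G1 \<subseteq> G2")
      case True then show ?thesis using goodD(2)[OF gC[OF 2(1)], of x y x' y'] 1 2 by auto
    next
      case False then have "G2 \<subseteq> G1" using cmp[OF 1(1) 2(1)] by auto
      then show ?thesis using goodD(2)[OF gC[OF 1(1)], of x y x' y'] 1 2 by auto
    qed
  qed
  have B: "(smul c x, \<lambda>i. \<iota> c * y i) \<in> \<Union>CC" if xy: "(x,y) \<in> \<Union>CC" for x y c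
  proof -
    obtain G1 where 1: "G1 \<in> CC" "(x,y) \<in> G1" using xy by auto
    then show ?thesis using goodD(3)[OF gC[OF 1(1)] 1(2)] by auto
  qed
  have C: "pn y = nE x \<and> (\<forall>i\<ge>m. y i = 0)" if xy: "(x,y) \<in> \<Union>CC" for x y
  proof -
    obtain G1 where 1: "G1 \<in> CC" "(x,y) \<in> G1" using xy by auto
    then show ?thesis using goodD(4,5)[OF gC[OF 1(1)] 1(2)] by auto
  qed
  have "G0 \<subseteq> \<Union>CC" using goodD(1)[OF gC[OF G]] G by auto
  then show ?thesis unfolding good_def
    by (intro conjI allI impI A B; (elim C[THEN conjunct1] C[THEN conjunct2, rule_format])?)
qed

lemma main_loc:
  "\<exists>T :: 'e \<Rightarrow> nat \<Rightarrow> 'v.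
           (\<forall>x y. T (x + y) = (\<lambda>i. T x i + T y i)) \<and>
           (\<forall>c x. T (smul c x) = (\<lambda>i. \<iota> c * T x i)) \<and>
           (\<forall>x i. m \<le> i \<longrightarrow> T x i = 0) \<and>
           (\<forall>x. prod_norm absV (\<lambda>i. nE (a i)) m (T x) = nE x) \<and>
           (\<forall>i<m. T (a i) = (\<lambda>j. if j = i then 1 else 0))"
proof -
  have "\<exists>M\<in>{G. good G}. \<forall>X\<in>{G. good G}. M \<subseteq> X \<longrightarrow> X = M"
  proof (rule subset_Zorn_nonempty)
    show "{G. good G} \<noteq> {}" using G0_good by auto
    show "\<And>CC. CC \<noteq> {} \<Longrightarrow> subset.chain {G. good G} CC \<Longrightarrow> \<Union>CC \<in> {G. good G}"
      using good_Union by auto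
  qed
  then obtain M where g: "good M" and mx: "\<And>X. good X \<Longrightarrow> M \<subseteq> X \<Longrightarrow> X = M" by auto
  have ex: "\<exists>y. (x,y) \<in> M" for x
  proof (rule ccontr)
    assume "\<not> ?thesis"
    then obtain M' where "good M'" "M \<subseteq> M'" "M' \<noteq> M" using extend[OF g] by blast
    then show False using mx by blast
  qed
  define T where "T x = (SOME y. (x,y) \<in> M)" for x
  have TM: "(x, T x) \<in> M" for x unfolding T_def using ex[of x] by (rule someI_ex)
  have Teq: "T x = y" if "(x,y) \<in> M" for x y using good_fun[OF g TM that] .
  have tt: "(\<lambda>i. nE (a i)) = t" unfolding t_def by simp
  show ?thesis
  proof (intro exI[of _ T] conjI allI impI)
    fix x y show "T (x + y) = (\<lambda>i. T x i + T y i)" using Teq goodD(2)[OF g TM TM] by blast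
  next
    fix c x show "T (smul c x) = (\<lambda>i. \<iota> c * T x i)" using Teq goodD(3)[OF g TM] by blast
  next
    fix x i assume "m \<le> i" then show "T x i = 0" using goodD(5)[OF g TM] by blast
  next
    fix x show "prod_norm absV (\<lambda>i. nE (a i)) m (T x) = nE x"
      using goodD(4)[OF g TM] unfolding tt pn_def by blast
  next
    fix i assume "i < m" then show "T (a i) = (\<lambda>j. if j = i then 1 else 0)"
      using Teq good_basis[OF g] by blast
  qed
qed

end

theorem mainTheorem1:
  fixes absK :: "'k::field \<Rightarrow> real" and absV :: "'v::field \<Rightarrow> real"
    and \<iota> :: "'k \<Rightarrow> 'v"
    and smul :: "'k \<Rightarrow> 'e::ab_group_add \<Rightarrow> 'e" and nE :: "'e \<Rightarrow> real"
    and a :: "nat \<Rightarrow> 'e" and m :: nat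
  assumes K_abs: "nonarch_abs absK" and K_nontriv: "nontrivial_abs absK"
    and K_complete: "complete_wrt absK" and K_not_sc: "\<not> sph_complete absK"
    and V_abs: "nonarch_abs absV" and V_sc: "sph_complete absV"
    and V_imm: "immediate_ext absK absV \<iota>"
    and E_vs: "vector_space smul" and E_norm: "nonarch_norm absK smul nE"
    and E_complete: "complete_wrt nE"
    and a_inj: "inj_on a {..<m}"
    and X_max: "max_orthogonal_set smul nE (a ` {..<m})"
  shows "\<exists>T :: 'e \<Rightarrow> nat \<Rightarrow> 'v.
           (\<forall>x y. T (x + y) = (\<lambda>i. T x i + T y i)) \<and>
           (\<forall>c x. T (smul c x) = (\<lambda>i. \<iota> c * T x i)) \<and>
           (\<forall>x i. m \<le> i \<longrightarrow> T x i = 0) \<and>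
           (\<forall>x. prod_norm absV (\<lambda>i. nE (a i)) m (T x) = nE x) \<and>
           (\<forall>i<m. T (a i) = (\<lambda>j. if j = i then 1 else 0))"
proof -
  interpret ctx smul absK absV \<iota> nE a m
    using E_vs K_abs V_abs V_sc V_imm E_norm a_inj X_max unfolding ctx_def ctx_axioms_def by blast
  show ?thesis by (rule main_loc)
qed

end
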